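(* Let $0<c_2<0.5$ and let $c_1$ be a real number. There is no set $A\subseteq\mathbb{N}$ such that $$\sum_{n=0}^N R_A(n)=c_2N^2+c_1N+o(\sqrt{N})\quad (N\to\infty).$$
   Context: $\mathbb{N}$ denotes the set of non-negative integers. For $A\subseteq\mathbb{N}$, $R_A(n)$ denotes the number of ordered pairs $(a,a')$ with $a,a'\in A$ and $a+a'=n$. *)

theory Defs
  imports "HOL-Analysis.Analysis" "HOL-Library.Landau_Symbols"
begin

definition rep_count :: "nat set \<Rightarrow> nat \<Rightarrow> nat" where
  "rep_count A n = card {(a, a'). a \<in> A \<and> a' \<in> A \<and> a + a' = n}"

end

theory Submission
  imports Defs
begin

definition Hset :: "nat \<Rightarrow> (nat \<times> nat) set" where
  "Hset M = {p \<in> {..<M} \<times> {..<M}. M \<le> fst p + snd p}"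

lemma square_split:
  fixes w :: "nat \<Rightarrow> 'a::comm_semiring_1"
  shows "(\<Sum>i<M. w i * z^i)^2 = (\<Sum>n<M. (\<Sum>i\<le>n. w i * w (n-i)) * z^n)
          + (\<Sum>p\<in>Hset M. w (fst p) * w (snd p) * z^(fst p + snd p))"
proof -
  let ?g = "\<lambda>p. w (fst p) * w (snd p) * z^(fst p + snd p)"
  let ?S = "{..<M} \<times> {..<M}"
  let ?L = "{p \<in> ?S. fst p + snd p < M}"
  have "(\<Sum>i<M. w i * z^i)^2 = (\<Sum>i<M. \<Sum>k<M. w i * w k * z^(i+k))"
    by (simp add: power2_eq_square sum_product power_add mult_ac)
  also have "\<dots> = sum ?g ?S"
    by (simp add: sum.cartesian_product case_prod_beta)
  also have "\<dots> = sum ?g (?S \<inter> {p. fst p + snd p < M}) + sum ?g (?S - {p. fst p + snd p < M})"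
    using sum.Int_Diff[of ?S ?g "{p. fst p + snd p < M}"] by simp
  also have "?S - {p. fst p + snd p < M} = Hset M"
    by (auto simp: Hset_def)
  also have "sum ?g (?S \<inter> {p. fst p + snd p < M}) = (\<Sum>n<M. (\<Sum>i\<le>n. w i * w (n-i)) * z^n)"
  proof -
    have "sum ?g (?S \<inter> {p. fst p + snd p < M}) = (\<Sum>q\<in>(SIGMA n:{..<M}. {..n}). w (snd q) * w (fst q - snd q) * z^(fst q))"
      by (rule sum.reindex_bij_witness[where i="\<lambda>q. (snd q, fst q - snd q)" and j="\<lambda>p. (fst p + snd p, fst p)"]) auto
    also have "\<dots> = (\<Sum>n<M. \<Sum>i\<le>n. w i * w (n-i) * z^n)"
      by (simp add: sum.Sigma case_prod_beta)
    finally show ?thesis by (simp add: sum_distrib_right)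
  qed
  finally show ?thesis by simp
qed

lemma card_Hset: "card (Hset M) \<le> M^2"
proof -
  have "card (Hset M) \<le> card ({..<M} \<times> {..<M})"
    by (rule card_mono) (auto simp: Hset_def)
  then show ?thesis by (simp add: card_cartesian_product power2_eq_square)
qed

lemma finite_Hset: "finite (Hset M)"
  by (rule finite_subset[of _ "{..<M} \<times> {..<M}"]) (auto simp: Hset_def)

definition ind :: "nat set \<Rightarrow> nat \<Rightarrow> real" where
  "ind A n = (if n \<in> A then 1 else 0)"

lemma rep_count_sum: "real (rep_count A n) = (\<Sum>i\<le>n. ind A i * ind A (n-i))"
proof -
  have "{(a, a'). a \<in> A \<and> a' \<in> A \<and> a + a' = n} = (\<lambda>i. (i, n-i)) ` {i\<in>{..n}. i \<in> A \<and> n - i \<in> A}"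
    by (auto simp: image_iff)
  then have "rep_count A n = card {i\<in>{..n}. i \<in> A \<and> n - i \<in> A}"
    unfolding rep_count_def by (simp add: card_image inj_on_def)
  also have "real \<dots> = sum (\<lambda>_. 1) {i\<in>{..n}. i \<in> A \<and> n - i \<in> A}"
    by (rule real_of_card)
  also have "\<dots> = (\<Sum>i\<le>n. if i \<in> A \<and> n - i \<in> A then 1 else 0)"
    by (rule sum.inter_filter) simp
  also have "\<dots> = (\<Sum>i\<le>n. ind A i * ind A (n-i))"
    by (rule sum.cong) (auto simp: ind_def)
  finally show ?thesis .
qed

lemma abel:
  fixes f :: "nat \<Rightarrow> 'a::comm_ring_1"
  assumes "M \<ge> 1"
  shows "(\<Sum>n<M. (f n - (if n = 0 then 0 else f (n-1))) * z^n) = (1-z) * (\<Sum>n<M. f n * z^n) + f (M-1) * z^M"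
  using assms
proof (induction M)
  case 0 then show ?case by simp
next
  case (Suc M)
  show ?case
  proof (cases "M = 0")
    case True then show ?thesis by (simp add: algebra_simps)
  next
    case False
    then have "M \<ge> 1" by simp
    from Suc.IH[OF this] False show ?thesis
      by (cases M) (simp_all add: algebra_simps)
  qed
qed

lemma cs_sum:
  fixes x :: "nat \<Rightarrow> real"
  shows "(\<Sum>j<M. x j)^2 \<le> M * (\<Sum>j<M. (x j)^2)"
proof -
  have "(\<Sum>j<M. x j * 1)^2 \<le> (\<Sum>j<M. (x j)^2) * (\<Sum>j<M. 1^2)"
    by (rule Cauchy_Schwarz_ineq_sum)
  then show ?thesis by (simp add: mult.commute)
qed

lemma cispow: "(cis x ^ j)^n = cis (real (j*n) * x)"
proof -
  have "(cis x ^ j)^n = cis (real n * (real j * x))" by (simp add: Complex.DeMoivre)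
  also have "real n * (real j * x) = real (j*n) * x" by simp
  finally show ?thesis .
qed

lemma ortho:
  assumes M: "M \<ge> 1" and n: "n < M" and m: "m < M"
  shows "(\<Sum>j<M. (cis (2*pi/M) ^ j)^n * cnj ((cis (2*pi/M) ^ j)^m)) = (if n = m then of_nat M else 0)"
proof -
  define d where "d = real n - real m"
  define w where "w = cis (2*pi*d/M)"
  have w: "(cis (2*pi/M) ^ j)^n * cnj ((cis (2*pi/M) ^ j)^m) = w^j" for j
  proof -
    have "(cis (2*pi/M) ^ j)^n * cnj ((cis (2*pi/M) ^ j)^m)
        = cis (real (j*n) * (2*pi/M)) * cnj (cis (real (j*m) * (2*pi/M)))"
      by (simp only: cispow)
    also have "\<dots> = cis (real (j*n) * (2*pi/M) - real (j*m) * (2*pi/M))"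
      by (simp add: cis_cnj cis_mult)
    also have "real (j*n) * (2*pi/M) - real (j*m) * (2*pi/M) = real j * (2*pi*d/M)"
      by (simp add: d_def algebra_simps diff_divide_distrib)
    finally show ?thesis by (simp add: w_def Complex.DeMoivre)
  qed
  have sumw: "(\<Sum>j<M. (cis (2*pi/M) ^ j)^n * cnj ((cis (2*pi/M) ^ j)^m)) = (\<Sum>j<M. w^j)"
    by (simp only: w)
  show ?thesis
  proof (cases "n = m")
    case True
    then have "w = 1" by (simp add: w_def d_def)
    then show ?thesis using True sumw by simp
  next
    case False
    have dint: "d = of_int (int n - int m)" by (simp add: d_def)
    have wM: "w^M = 1"
    proof -
      have "w^M = cis (2*pi*d)" using M by (simp add: w_def Complex.DeMoivre)
      also have "\<dots> = 1" using dint by (simp add: cis_multiple_2pi)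
      finally show ?thesis .
    qed
    have w1: "w \<noteq> 1"
    proof
      assume "w = 1"
      then have "cos (2*pi*d/M) = 1" by (simp add: w_def complex_eq_iff)
      then obtain k :: int where k: "2*pi*d/M = k * 2 * pi" by (auto simp: cos_one_2pi_int)
      then have "d = k * M" using M by (simp add: field_simps)
      moreover have "\<bar>d\<bar> < M" using n m by (simp add: d_def)
      moreover have "d \<noteq> 0" using False by (simp add: d_def)
      ultimately show False
      proof -
        assume dk: "d = k * M" and lt: "\<bar>d\<bar> < M" and d0: "d \<noteq> 0"
        have "k \<noteq> 0" using dk d0 by auto
        then have "1 \<le> \<bar>k\<bar>" by linarith
        then have "(1::real) \<le> \<bar>of_int k\<bar>" by (metis of_int_1_le_iff of_int_abs)
        then have "1 * real M \<le> \<bar>of_int k\<bar> * real M" by (rule mult_right_mono) simp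
        also have "\<dots> = \<bar>d\<bar>" using dk by (simp add: abs_mult)
        finally show False using lt by simp
      qed
    qed
    have "(\<Sum>j<M. w^j) = 0" using wM w1 by (simp add: sum_gp_strict)
    then show ?thesis using False sumw by simp
  qed
qed

lemma parseval:
  fixes b :: "nat \<Rightarrow> complex"
  assumes M: "M \<ge> 1"
  shows "(\<Sum>j<M. (cmod (\<Sum>n<M. b n * (cis (2*pi/M) ^ j)^n))^2) = M * (\<Sum>n<M. (cmod (b n))^2)"
proof -
  let ?u = "\<lambda>j. cis (2*pi/M) ^ j"
  have "complex_of_real (\<Sum>j<M. (cmod (\<Sum>n<M. b n * ?u j^n))^2)
      = (\<Sum>j<M. (\<Sum>n<M. b n * ?u j^n) * cnj (\<Sum>m<M. b m * ?u j^m))"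
    by (simp only: of_real_sum complex_norm_square)
  also have "\<dots> = (\<Sum>j<M. \<Sum>n<M. \<Sum>m<M. b n * cnj (b m) * (?u j^n * cnj (?u j^m)))"
  proof (rule sum.cong[OF refl])
    fix j
    have "(\<Sum>n<M. b n * ?u j^n) * cnj (\<Sum>m<M. b m * ?u j^m) = (\<Sum>n<M. \<Sum>m<M. (b n * ?u j^n) * cnj (b m * ?u j^m))"
      by (simp only: cnj_sum sum_product)
    also have "\<dots> = (\<Sum>n<M. \<Sum>m<M. b n * cnj (b m) * (?u j^n * cnj (?u j^m)))"
      by (intro sum.cong refl) (simp only: complex_cnj_mult mult_ac)
    finally show "(\<Sum>n<M. b n * ?u j^n) * cnj (\<Sum>m<M. b m * ?u j^m) = (\<Sum>n<M. \<Sum>m<M. b n * cnj (b m) * (?u j^n * cnj (?u j^m)))" .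
  qed
  also have "\<dots> = (\<Sum>n<M. \<Sum>j<M. \<Sum>m<M. b n * cnj (b m) * (?u j^n * cnj (?u j^m)))"
    by (rule sum.swap)
  also have "\<dots> = (\<Sum>n<M. \<Sum>m<M. \<Sum>j<M. b n * cnj (b m) * (?u j^n * cnj (?u j^m)))"
    by (rule sum.cong[OF refl], rule sum.swap)
  also have "\<dots> = (\<Sum>n<M. \<Sum>m<M. b n * cnj (b m) * (\<Sum>j<M. ?u j^n * cnj (?u j^m)))"
    by (simp only: sum_distrib_left)
  also have "\<dots> = (\<Sum>n<M. \<Sum>m<M. b n * cnj (b m) * (if n = m then of_nat M else 0))"
    by (intro sum.cong refl) (subst ortho[OF M], auto)
  also have "\<dots> = (\<Sum>n<M. b n * cnj (b n) * of_nat M)"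
    by (simp add: if_distrib[of "\<lambda>x. _ * x"] sum.delta cong: if_cong)
  also have "\<dots> = complex_of_real (M * (\<Sum>n<M. (cmod (b n))^2))"
    by (simp add: sum_distrib_left mult_ac flip: complex_norm_square)
  finally show ?thesis using of_real_eq_iff by blast
qed

definition sA :: "nat set \<Rightarrow> nat \<Rightarrow> nat" where
  "sA A n = (\<Sum>k\<le>n. rep_count A k)"

definition eA :: "nat set \<Rightarrow> real \<Rightarrow> real \<Rightarrow> nat \<Rightarrow> real" where
  "eA A c1 c2 n = real (sA A n) - (c2 * real n ^ 2 + c1 * real n)"

lemma R_decomp:
  "real (rep_count A n) = (if n = 0 then 0 else c2 * (2 * real n - 1) + c1)
     + (eA A c1 c2 n - (if n = 0 then 0 else eA A c1 c2 (n-1)))"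
proof (cases n)
  case 0 then show ?thesis by (simp add: eA_def sA_def)
next
  case (Suc k)
  have "sA A (Suc k) = sA A k + rep_count A (Suc k)" by (simp add: sA_def)
  then show ?thesis using Suc by (simp add: eA_def algebra_simps power2_eq_square)
qed

lemma identity:
  fixes z :: complex and A :: "nat set" and c1 c2 :: real
  assumes M: "M \<ge> 1"
  defines "e \<equiv> eA A c1 c2"
  shows "(\<Sum>n<M. of_real (ind A n) * z^n)^2
     = 2 * of_real c2 * (\<Sum>n<M. z^n)^2 + of_real (c1 - 3*c2) * (\<Sum>n<M. z^n) - of_real (c1 - c2)
       + (1 - z) * (\<Sum>n<M. of_real (e n) * z^n) + of_real (e (M-1)) * z^M
       + (\<Sum>p\<in>Hset M. of_real (ind A (fst p)) * of_real (ind A (snd p)) * z^(fst p + snd p))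
       - 2 * of_real c2 * (\<Sum>p\<in>Hset M. z^(fst p + snd p))"
proof -
  let ?T = "(\<Sum>p\<in>Hset M. of_real (ind A (fst p)) * of_real (ind A (snd p)) * z^(fst p + snd p)) :: complex"
  let ?TQ = "(\<Sum>p\<in>Hset M. z^(fst p + snd p)) :: complex"
  let ?Q = "(\<Sum>n<M. z^n) :: complex"
  define hd :: "nat \<Rightarrow> complex" where "hd n = of_real (if n = 0 then 0 else c2 * (2 * real n - 1) + c1)" for n
  define ed :: "nat \<Rightarrow> complex" where "ed n = of_real (e n) - (if n = 0 then 0 else of_real (e (n-1)))" for n
  have "(\<Sum>n<M. of_real (ind A n) * z^n)^2
      = (\<Sum>n<M. (\<Sum>i\<le>n. of_real (ind A i) * of_real (ind A (n-i))) * z^n) + ?T"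
    by (rule square_split)
  also have "(\<Sum>n<M. (\<Sum>i\<le>n. of_real (ind A i) * of_real (ind A (n-i))) * z^n)
      = (\<Sum>n<M. (hd n + ed n) * z^n)"
  proof (rule sum.cong[OF refl])
    fix n
    have "(\<Sum>i\<le>n. complex_of_real (ind A i) * of_real (ind A (n-i))) = of_real (real (rep_count A n))"
      by (simp add: rep_count_sum)
    also have "\<dots> = hd n + ed n"
      by (subst R_decomp[of _ _ c2 c1]) (simp add: hd_def ed_def e_def)
    finally show "(\<Sum>i\<le>n. complex_of_real (ind A i) * of_real (ind A (n-i))) * z^n = (hd n + ed n) * z^n"
      by simp
  qed
  also have "\<dots> = (\<Sum>n<M. hd n * z^n) + (\<Sum>n<M. ed n * z^n)"
    by (simp add: distrib_right sum.distrib)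
  also have "(\<Sum>n<M. ed n * z^n) = (1 - z) * (\<Sum>n<M. of_real (e n) * z^n) + of_real (e (M-1)) * z^M"
    unfolding ed_def using abel[OF M, of "\<lambda>n. complex_of_real (e n)" z] by simp
  also have "(\<Sum>n<M. hd n * z^n)
      = 2 * of_real c2 * (\<Sum>n<M. of_nat (n+1) * z^n) + of_real (c1 - 3*c2) * ?Q - of_real (c1 - c2)"
  proof -
    have "(\<Sum>n<M. hd n * z^n) = (\<Sum>n<M. 2 * of_real c2 * (of_nat (n+1) * z^n) + of_real (c1 - 3*c2) * z^n
            - (if n = 0 then of_real (c1 - c2) else 0))"
      by (rule sum.cong[OF refl]) (auto simp: hd_def algebra_simps)
    also have "\<dots> = 2 * of_real c2 * (\<Sum>n<M. of_nat (n+1) * z^n) + of_real (c1 - 3*c2) * ?Q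
            - (\<Sum>n<M. (if n = 0 then of_real (c1 - c2) else 0))"
      by (simp add: sum.distrib sum_subtractf sum_distrib_left)
    also have "(\<Sum>n<M. (if n = 0 then complex_of_real (c1 - c2) else 0)) = of_real (c1 - c2)"
      using M by (simp add: sum.delta)
    finally show ?thesis .
  qed
  also have "(\<Sum>n<M. of_nat (n+1) * z^n) = ?Q^2 - ?TQ"
  proof -
    have "(\<Sum>i<M. 1 * z^i)^2 = (\<Sum>n<M. (\<Sum>i\<le>n. (1::complex) * 1) * z^n) + (\<Sum>p\<in>Hset M. 1 * 1 * z^(fst p + snd p))"
      by (rule square_split)
    then show ?thesis by simp
  qed
  finally show ?thesis by (simp add: algebra_simps)
qed

lemma Hsum_bound:
  fixes z :: complex and w :: "nat \<Rightarrow> complex"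
  assumes "cmod z \<le> 1" and "\<And>n. cmod (w n) \<le> 1"
  shows "cmod (\<Sum>p\<in>Hset M. w (fst p) * w (snd p) * z^(fst p + snd p)) \<le> real M^2 * cmod z ^ M"
proof -
  have "cmod (\<Sum>p\<in>Hset M. w (fst p) * w (snd p) * z^(fst p + snd p))
       \<le> (\<Sum>p\<in>Hset M. cmod (w (fst p) * w (snd p) * z^(fst p + snd p)))"
    by (rule norm_sum)
  also have "\<dots> \<le> (\<Sum>p\<in>Hset M. cmod z ^ M)"
  proof (rule sum_mono)
    fix p assume p: "p \<in> Hset M"
    have "cmod (w (fst p) * w (snd p) * z^(fst p + snd p)) = cmod (w (fst p)) * cmod (w (snd p)) * cmod z ^ (fst p + snd p)"
      by (simp add: norm_mult norm_power)
    also have "\<dots> \<le> 1 * 1 * cmod z ^ (fst p + snd p)"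
    proof -
      have "cmod (w (fst p)) * cmod (w (snd p)) \<le> 1 * 1"
        using assms(2) by (intro mult_mono) auto
      then show ?thesis by (intro mult_right_mono) auto
    qed
    also have "\<dots> \<le> cmod z ^ M"
      using p assms(1) by (auto simp: Hset_def intro: power_decreasing)
    finally show "cmod (w (fst p) * w (snd p) * z^(fst p + snd p)) \<le> cmod z ^ M" .
  qed
  also have "\<dots> = real (card (Hset M)) * cmod z ^ M" by simp
  also have "\<dots> \<le> real M^2 * cmod z ^ M"
    using card_Hset[of M] by (intro mult_right_mono) (simp_all add: of_nat_le_iff[symmetric])
  finally show ?thesis .
qed

lemma aux7:
  fixes x a b c d f g h :: complex
  shows "x = a + b - c + d + f + g - h \<Longrightarrow> x - a = b - c + d + f + g - h"
  by (simp add: algebra_simps)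

lemma norm6:
  fixes a b c d f h :: complex
  shows "cmod (a - b + c + d + f - h) \<le> cmod a + cmod b + cmod c + cmod d + cmod f + cmod h"
proof -
  have "cmod (a - b + c + d + f - h) \<le> cmod (a - b + c + d + f) + cmod h" by (rule norm_triangle_ineq4)
  moreover have "cmod (a - b + c + d + f) \<le> cmod (a - b + c + d) + cmod f" by (rule norm_triangle_ineq)
  moreover have "cmod (a - b + c + d) \<le> cmod (a - b + c) + cmod d" by (rule norm_triangle_ineq)
  moreover have "cmod (a - b + c) \<le> cmod (a - b) + cmod c" by (rule norm_triangle_ineq)
  moreover have "cmod (a - b) \<le> cmod a + cmod b" by (rule norm_triangle_ineq4)
  ultimately show ?thesis by linarith
qed

lemma bound:
  fixes z :: complex and A :: "nat set" and c1 c2 :: real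
  assumes M: "M \<ge> 1" and z: "cmod z \<le> 1"
  defines "e \<equiv> eA A c1 c2"
  shows "cmod ((\<Sum>n<M. of_real (ind A n) * z^n)^2 - 2 * of_real c2 * (\<Sum>n<M. z^n)^2)
     \<le> \<bar>c1 - 3*c2\<bar> * cmod (\<Sum>n<M. z^n) + \<bar>c1 - c2\<bar> + cmod (1 - z) * cmod (\<Sum>n<M. of_real (e n) * z^n)
       + \<bar>e (M-1)\<bar> * cmod z ^ M + (1 + 2 * \<bar>c2\<bar>) * real M^2 * cmod z ^ M"
proof -
  let ?T = "(\<Sum>p\<in>Hset M. of_real (ind A (fst p)) * of_real (ind A (snd p)) * z^(fst p + snd p)) :: complex"
  let ?TQ = "(\<Sum>p\<in>Hset M. z^(fst p + snd p)) :: complex"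
  let ?Q = "(\<Sum>n<M. z^n) :: complex"
  let ?E = "(\<Sum>n<M. of_real (e n) * z^n) :: complex"
  have T: "cmod ?T \<le> real M^2 * cmod z ^ M"
    using Hsum_bound[OF z, of "\<lambda>n. complex_of_real (ind A n)" M] by (simp add: ind_def)
  have TQ: "cmod ?TQ \<le> real M^2 * cmod z ^ M"
    using Hsum_bound[OF z, of "\<lambda>n. 1" M] by simp
  have eq: "(\<Sum>n<M. of_real (ind A n) * z^n)^2 - 2 * of_real c2 * ?Q^2
     = of_real (c1 - 3*c2) * ?Q - of_real (c1 - c2) + (1 - z) * ?E + of_real (e (M-1)) * z^M + ?T - 2 * of_real c2 * ?TQ"
  proof -
    have X: "(\<Sum>n<M. of_real (ind A n) * z^n)^2 = 2 * of_real c2 * ?Q^2 + of_real (c1 - 3*c2) * ?Q - of_real (c1 - c2) + (1 - z) * ?E + of_real (e (M-1)) * z^M + ?T - 2 * of_real c2 * ?TQ"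
      unfolding e_def by (rule identity[OF M])
    show ?thesis by (rule aux7[OF X])
  qed
  have "cmod (of_real (c1 - 3*c2) * ?Q - of_real (c1 - c2) + (1 - z) * ?E + of_real (e (M-1)) * z^M + ?T - 2 * of_real c2 * ?TQ) \<le> cmod (of_real (c1 - 3*c2) * ?Q) + cmod (of_real (c1 - c2)) + cmod ((1 - z) * ?E)
      + cmod (of_real (e (M-1)) * z^M) + cmod ?T + cmod (2 * of_real c2 * ?TQ)"
    by (rule norm6)
  also have "\<dots> \<le> \<bar>c1 - 3*c2\<bar> * cmod ?Q + \<bar>c1 - c2\<bar> + cmod (1 - z) * cmod ?E
       + \<bar>e (M-1)\<bar> * cmod z ^ M + (1 + 2 * \<bar>c2\<bar>) * real M^2 * cmod z ^ M"
  proof -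
    have "cmod (2 * of_real c2 * ?TQ) = 2 * \<bar>c2\<bar> * cmod ?TQ" by (simp add: norm_mult)
    also have "\<dots> \<le> 2 * \<bar>c2\<bar> * (real M^2 * cmod z ^ M)" using TQ by (intro mult_left_mono) auto
    finally have "cmod (2 * of_real c2 * ?TQ) \<le> 2 * \<bar>c2\<bar> * (real M^2 * cmod z ^ M)" .
    moreover have "cmod (of_real (c1 - 3*c2) * ?Q) = \<bar>c1 - 3*c2\<bar> * cmod ?Q" by (simp only: norm_mult norm_of_real)
    moreover have "cmod (complex_of_real (c1 - c2)) = \<bar>c1 - c2\<bar>" by (simp only: norm_of_real)
    moreover have "cmod ((1 - z) * ?E) = cmod (1 - z) * cmod ?E" by (simp add: norm_mult)
    moreover have "cmod (complex_of_real (e (M-1)) * z^M) = \<bar>e (M-1)\<bar> * cmod z ^ M" by (simp add: norm_mult norm_power)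
    moreover have "(1 + 2 * \<bar>c2\<bar>) * real M^2 * cmod z ^ M = real M^2 * cmod z ^ M + 2 * \<bar>c2\<bar> * (real M^2 * cmod z ^ M)"
      by (simp add: algebra_simps)
    ultimately show ?thesis using T by linarith
  qed
  finally show ?thesis unfolding eq .
qed

lemma sum_le_sqrt:
  fixes x :: "nat \<Rightarrow> real"
  shows "(\<Sum>j<M. x j) \<le> sqrt (M * (\<Sum>j<M. (x j)^2))"
  by (rule real_le_rsqrt) (rule cs_sum)

lemma parseval_r:
  fixes c :: "nat \<Rightarrow> real"
  assumes M: "M \<ge> 1" and r: "r \<ge> 0"
  shows "(\<Sum>j<M. (cmod (\<Sum>n<M. of_real (c n) * (of_real r * cis (2*pi/M) ^ j)^n))^2) = M * (\<Sum>n<M. (c n)^2 * (r^2)^n)"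
proof -
  have "(\<Sum>j<M. (cmod (\<Sum>n<M. of_real (c n) * (of_real r * cis (2*pi/M) ^ j)^n))^2)
      = (\<Sum>j<M. (cmod (\<Sum>n<M. complex_of_real (c n * r^n) * (cis (2*pi/M) ^ j)^n))^2)"
    by (simp add: power_mult_distrib mult_ac)
  also have "\<dots> = M * (\<Sum>n<M. (cmod (complex_of_real (c n * r^n)))^2)"
    by (rule parseval[OF M])
  also have "\<dots> = M * (\<Sum>n<M. (c n)^2 * (r^2)^n)"
    using r by (simp add: norm_mult norm_power power_mult_distrib power_mult[symmetric] mult.commute)
  finally show ?thesis .
qed

lemma upper:
  fixes A :: "nat set" and c1 c2 r :: real
  assumes M: "M \<ge> 1" and r0: "0 \<le> r" and r1: "r \<le> 1" and c2: "c2 > 0"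
  defines "e \<equiv> eA A c1 c2"
  shows "(\<Sum>n<M. ind A n * (r^2)^n) \<le> 2*c2*(\<Sum>n<M. (r^2)^n) + \<bar>c1 - 3*c2\<bar> * sqrt (\<Sum>n<M. (r^2)^n)
     + \<bar>c1 - c2\<bar> + 2 * sqrt (\<Sum>n<M. (e n)^2 * (r^2)^n) + (\<bar>e (M-1)\<bar> * r^M + (1 + 2*c2) * real M^2 * r^M)"
proof -
  define z where "z j = complex_of_real r * cis (2*pi/M) ^ j" for j
  define P where "P j = cmod (\<Sum>n<M. of_real (ind A n) * z j^n)" for j
  define Q where "Q j = cmod (\<Sum>n<M. z j^n)" for j
  define E where "E j = cmod (\<Sum>n<M. of_real (e n) * z j^n)" for j
  define B where "B = \<bar>e (M-1)\<bar> * r^M + (1 + 2*c2) * real M^2 * r^M"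
  define q where "q = (\<Sum>n<M. (r^2)^n)"
  define X where "X = (\<Sum>n<M. ind A n * (r^2)^n)"
  define Se where "Se = (\<Sum>n<M. (e n)^2 * (r^2)^n)"
  have zn: "cmod (z j) = r" for j
    using r0 by (simp add: z_def norm_mult norm_power)
  have pt: "P j^2 \<le> 2*c2*Q j^2 + \<bar>c1 - 3*c2\<bar> * Q j + \<bar>c1 - c2\<bar> + 2 * E j + B" for j
  proof -
    let ?Pc = "(\<Sum>n<M. of_real (ind A n) * z j^n)"
    let ?Qc = "(\<Sum>n<M. z j^n)"
    have bd: "cmod (?Pc^2 - 2 * of_real c2 * ?Qc^2) \<le> \<bar>c1 - 3*c2\<bar> * Q j + \<bar>c1 - c2\<bar> + cmod (1 - z j) * E j + B"
      using bound[OF M, of "z j" A c2 c1] zn[of j] r1 c2 by (simp add: Q_def E_def B_def e_def add.assoc)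
    have "P j^2 - 2*c2*Q j^2 = cmod (?Pc^2) - cmod (2 * of_real c2 * ?Qc^2)"
      using c2 by (simp add: P_def Q_def norm_mult norm_power)
    also have "\<dots> \<le> cmod (?Pc^2 - 2 * of_real c2 * ?Qc^2)"
      by (rule norm_triangle_ineq2)
    finally have 1: "P j^2 - 2*c2*Q j^2 \<le> \<bar>c1 - 3*c2\<bar> * Q j + \<bar>c1 - c2\<bar> + cmod (1 - z j) * E j + B"
      using bd by linarith
    have "cmod (1 - z j) \<le> 2"
      using norm_triangle_ineq4[of 1 "z j"] zn r1 by simp
    then have "cmod (1 - z j) * E j \<le> 2 * E j"
      by (intro mult_right_mono) (simp_all add: E_def)
    then show ?thesis using 1 by linarith
  qed
  have sumP: "(\<Sum>j<M. P j^2) = M * X"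
  proof -
    have "(\<Sum>j<M. P j^2) = M * (\<Sum>n<M. (ind A n)^2 * (r^2)^n)"
      unfolding P_def z_def by (rule parseval_r[OF M r0])
    also have "(\<Sum>n<M. (ind A n)^2 * (r^2)^n) = X"
      unfolding X_def by (intro sum.cong refl) (simp add: ind_def)
    finally show ?thesis .
  qed
  have sumQ2: "(\<Sum>j<M. Q j^2) = M * q"
  proof -
    have "(\<Sum>j<M. Q j^2) = (\<Sum>j<M. (cmod (\<Sum>n<M. of_real ((\<lambda>_. 1) n) * (of_real r * cis (2*pi/M) ^ j)^n))^2)"
      by (simp add: Q_def z_def)
    also have "\<dots> = M * (\<Sum>n<M. ((\<lambda>_. 1::real) n)^2 * (r^2)^n)"
      by (rule parseval_r[OF M r0])
    finally show ?thesis by (simp add: q_def)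
  qed
  have sumE2: "(\<Sum>j<M. E j^2) = M * Se"
    unfolding E_def z_def Se_def by (rule parseval_r[OF M r0])
  have q0: "q \<ge> 0" unfolding q_def by (intro sum_nonneg) simp
  have Se0: "Se \<ge> 0" unfolding Se_def by (intro sum_nonneg) simp
  have sqM: "sqrt (real M * (real M * t)) = real M * sqrt t" if "t \<ge> 0" for t
    using that by (simp add: real_sqrt_mult)
  have sumQ: "(\<Sum>j<M. Q j) \<le> M * sqrt q"
    using sum_le_sqrt[of Q M] sumQ2 sqM[OF q0] by simp
  have sumE: "(\<Sum>j<M. E j) \<le> M * sqrt Se"
    using sum_le_sqrt[of E M] sumE2 sqM[OF Se0] by simp
  have "M * X \<le> (\<Sum>j<M. 2*c2*Q j^2 + \<bar>c1 - 3*c2\<bar> * Q j + \<bar>c1 - c2\<bar> + 2 * E j + B)"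
    unfolding sumP[symmetric] by (rule sum_mono) (rule pt)
  also have "\<dots> = 2*c2*(\<Sum>j<M. Q j^2) + \<bar>c1 - 3*c2\<bar> * (\<Sum>j<M. Q j) + M * \<bar>c1 - c2\<bar> + 2 * (\<Sum>j<M. E j) + M * B"
    by (simp add: sum.distrib sum_distrib_left)
  also have "\<dots> \<le> 2*c2*(M*q) + \<bar>c1 - 3*c2\<bar> * (M * sqrt q) + M * \<bar>c1 - c2\<bar> + 2 * (M * sqrt Se) + M * B"
    unfolding sumQ2 using sumQ sumE by (intro add_mono mult_left_mono order_refl) auto
  also have "\<dots> = M * (2*c2*q + \<bar>c1 - 3*c2\<bar> * sqrt q + \<bar>c1 - c2\<bar> + 2 * sqrt Se + B)"
    by (simp add: algebra_simps)
  finally have "X \<le> 2*c2*q + \<bar>c1 - 3*c2\<bar> * sqrt q + \<bar>c1 - c2\<bar> + 2 * sqrt Se + B"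
    using M by simp
  then show ?thesis unfolding X_def q_def Se_def B_def .
qed

lemma lower:
  fixes A :: "nat set" and c1 c2 \<rho> :: real
  assumes M: "M \<ge> 1" and r0: "0 \<le> \<rho>" and r1: "\<rho> \<le> 1" and c2: "c2 > 0"
  defines "e \<equiv> eA A c1 c2"
  shows "2*c2*(\<Sum>n<M. \<rho>^n)^2 - \<bar>c1 - 3*c2\<bar> * (\<Sum>n<M. \<rho>^n) - \<bar>c1 - c2\<bar>
          - (1 - \<rho>) * (\<Sum>n<M. \<bar>e n\<bar> * \<rho>^n) - (\<bar>e (M-1)\<bar> * \<rho>^M + (1 + 2*c2) * real M^2 * \<rho>^M)
         \<le> (\<Sum>n<M. ind A n * \<rho>^n)^2"
proof -
  define z where "z = complex_of_real \<rho>"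
  define X where "X = (\<Sum>n<M. ind A n * \<rho>^n)"
  define q where "q = (\<Sum>n<M. \<rho>^n)"
  define B where "B = \<bar>e (M-1)\<bar> * \<rho>^M + (1 + 2*c2) * real M^2 * \<rho>^M"
  have Pc: "(\<Sum>n<M. of_real (ind A n) * z^n) = complex_of_real X"
    by (simp add: z_def X_def)
  have Qc: "(\<Sum>n<M. z^n) = complex_of_real q"
    by (simp add: z_def q_def)
  have q0: "q \<ge> 0" unfolding q_def using r0 by (intro sum_nonneg) simp
  have zn: "cmod z = \<rho>" using r0 by (simp add: z_def)
  have r1'': "cmod z \<le> 1" using zn r1 by simp
  have bd0: "cmod ((\<Sum>n<M. of_real (ind A n) * z^n)^2 - 2 * of_real c2 * (\<Sum>n<M. z^n)^2) \<le> \<bar>c1 - 3*c2\<bar> * cmod (\<Sum>n<M. z^n) + \<bar>c1 - c2\<bar>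
       + cmod (1 - z) * cmod (\<Sum>n<M. of_real (e n) * z^n) + (\<bar>e (M-1)\<bar> * cmod z ^ M + (1 + 2 * \<bar>c2\<bar>) * real M^2 * cmod z ^ M)"
    using bound[OF M r1'', of A c2 c1] unfolding e_def by (simp only: add.assoc)
  have bd: "cmod (complex_of_real X^2 - 2 * of_real c2 * (complex_of_real q)^2) \<le> \<bar>c1 - 3*c2\<bar> * cmod (complex_of_real q) + \<bar>c1 - c2\<bar>
       + cmod (1 - z) * cmod (\<Sum>n<M. of_real (e n) * z^n) + B"
    using bd0 unfolding Pc Qc B_def zn using c2 by simp
  have "complex_of_real X^2 - 2 * of_real c2 * (complex_of_real q)^2 = complex_of_real (X^2 - 2*c2*q^2)"
    by simp
  then have n1: "cmod (complex_of_real X^2 - 2 * of_real c2 * (complex_of_real q)^2) = \<bar>X^2 - 2*c2*q^2\<bar>"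
    by (simp only: norm_of_real)
  have n2: "cmod (complex_of_real q) = q" using q0 by simp
  have "1 - z = complex_of_real (1 - \<rho>)" by (simp add: z_def)
  then have n3: "cmod (1 - z) = 1 - \<rho>" using r1 by (simp only: norm_of_real)
  have n4: "cmod (\<Sum>n<M. of_real (e n) * z^n) \<le> (\<Sum>n<M. \<bar>e n\<bar> * \<rho>^n)"
    using norm_sum[of "\<lambda>n. of_real (e n) * z^n" "{..<M}"] zn by (simp add: norm_mult norm_power)
  have n5: "cmod (1 - z) * cmod (\<Sum>n<M. of_real (e n) * z^n) \<le> (1 - \<rho>) * (\<Sum>n<M. \<bar>e n\<bar> * \<rho>^n)"
    unfolding n3 using n4 r1 by (intro mult_left_mono) auto
  have "2*c2*q^2 - X^2 \<le> \<bar>X^2 - 2*c2*q^2\<bar>" by simp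
  then have "2*c2*q^2 - X^2 \<le> \<bar>c1 - 3*c2\<bar> * q + \<bar>c1 - c2\<bar> + (1 - \<rho>) * (\<Sum>n<M. \<bar>e n\<bar> * \<rho>^n) + B"
  proof -
    from bd have "\<bar>X^2 - 2*c2*q^2\<bar> \<le> \<bar>c1 - 3*c2\<bar> * q + \<bar>c1 - c2\<bar> + cmod (1 - z) * cmod (\<Sum>n<M. of_real (e n) * z^n) + B"
      unfolding n1 n2 .
    then show ?thesis using n5 \<open>2*c2*q^2 - X^2 \<le> \<bar>X^2 - 2*c2*q^2\<bar>\<close> by linarith
  qed
  then show ?thesis unfolding X_def q_def B_def by linarith
qed

lemma e_bound:
  fixes f :: "nat \<Rightarrow> real"
  assumes "f \<in> o(\<lambda>N. sqrt (real N))" and "\<epsilon> > 0"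
  shows "\<exists>C\<ge>0. \<forall>n. \<bar>f n\<bar> \<le> \<epsilon> * sqrt (real n) + C"
proof -
  have "eventually (\<lambda>n. norm (f n) \<le> \<epsilon> * norm (sqrt (real n))) at_top"
    by (rule landau_o.smallD[OF assms])
  then obtain N where N: "\<And>n. n \<ge> N \<Longrightarrow> \<bar>f n\<bar> \<le> \<epsilon> * sqrt (real n)"
    by (auto simp: eventually_at_top_linorder)
  define C where "C = (\<Sum>n<N. \<bar>f n\<bar>)"
  have C0: "C \<ge> 0" unfolding C_def by (intro sum_nonneg) simp
  have "\<bar>f n\<bar> \<le> \<epsilon> * sqrt (real n) + C" for n
  proof (cases "n < N")
    case True
    then have "\<bar>f n\<bar> \<le> C" unfolding C_def
      by (intro member_le_sum) auto
    moreover have "\<epsilon> * sqrt (real n) \<ge> 0" using assms(2) by simp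
    ultimately show ?thesis by linarith
  next
    case False
    then show ?thesis using N[of n] C0 by simp
  qed
  then show ?thesis using C0 by blast
qed

lemma sqrt_nat_le: "sqrt (real n) \<le> real n"
proof (cases "n = 0")
  case True then show ?thesis by simp
next
  case False
  then have "1 \<le> sqrt (real n)" by simp
  then have "sqrt (real n) * 1 \<le> sqrt (real n) * sqrt (real n)" by (intro mult_left_mono) auto
  then show ?thesis by simp
qed

lemma geo_sum:
  fixes \<rho> :: real assumes "\<rho> < 1"
  shows "(1 - \<rho>) * (\<Sum>n<M. \<rho>^n) = 1 - \<rho>^M"
  using assms by (simp add: sum_gp_strict)

lemma n_sum:
  fixes \<rho> :: real assumes "0 \<le> \<rho>" "\<rho> < 1"
  shows "(1 - \<rho>) * (\<Sum>n<M. real n * \<rho>^n) \<le> (\<Sum>n<M. \<rho>^n)"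
proof (cases "M = 0")
  case True then show ?thesis by simp
next
  case False
  then have M: "M \<ge> 1" by simp
  have "(\<Sum>n<M. (real n - (if n = 0 then 0 else real (n-1))) * \<rho>^n) = (1-\<rho>) * (\<Sum>n<M. real n * \<rho>^n) + real (M-1) * \<rho>^M"
    by (rule abel[OF M])
  moreover have "(\<Sum>n<M. (real n - (if n = 0 then 0 else real (n-1))) * \<rho>^n) \<le> (\<Sum>n<M. \<rho>^n)"
    using assms by (intro sum_mono) (auto simp: of_nat_diff)
  moreover have "real (M-1) * \<rho>^M \<ge> 0" using assms by simp
  ultimately show ?thesis by linarith
qed

lemma pow_tends: 
  fixes r :: real assumes "0 \<le> r" "r < 1"
  shows "(\<lambda>M. real M^2 * r^M) \<longlonglongrightarrow> 0"
proof -
  have "(\<lambda>M. of_nat M * sqrt r ^ M) \<longlonglongrightarrow> (0::real)"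
    using assms by (intro powser_times_n_limit_0) (simp add: real_sqrt_lt_1_iff)
  then have "(\<lambda>M. (of_nat M * sqrt r ^ M) * (of_nat M * sqrt r ^ M)) \<longlonglongrightarrow> (0::real) * 0"
    by (intro tendsto_mult)
  moreover have "(of_nat M * sqrt r ^ M) * (of_nat M * sqrt r ^ M) = real M^2 * r^M" for M
  proof -
    have "sqrt r ^ M * sqrt r ^ M = (sqrt r * sqrt r) ^ M" by (simp only: power_mult_distrib)
    also have "\<dots> = r^M" using assms by simp
    finally have "sqrt r ^ M * sqrt r ^ M = r^M" .
    then show ?thesis by (simp add: power2_eq_square mult_ac)
  qed
  ultimately show ?thesis by simp
qed

lemma final_arith:
  fixes a g \<epsilon> K K' t y Br Brho rM :: real
  assumes a0: "0 < a" and a1: "a < 1" and g: "g = a - a^2"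
    and eps: "\<epsilon> = g / 100" and t0: "0 \<le> t" and K: "0 \<le> K" and K': "0 \<le> K'"
    and tK: "(3*K + K') * t \<le> g / 10"
    and B: "3 * Br + Brho + 2 * rM \<le> g / 10" and Br0: "0 \<le> Br" and Brho0: "0 \<le> Brho" and rM0: "0 \<le> rM"
    and y0: "0 \<le> y" and up: "y \<le> a + 4*\<epsilon> + K*t + Br"
    and lo: "a - K'*t - 2*rM - Brho \<le> y^2"
  shows False
proof -
  define \<delta> where "\<delta> = 4*\<epsilon> + K*t + Br"
  have gpos: "g > 0" using a0 a1 g by (simp add: power2_eq_square)
  have gle: "g \<le> 1/4"
  proof -
    have "0 \<le> (a - 1/2)^2" by simp
    moreover have "(a - 1/2)^2 = a^2 - a + 1/4" by (simp add: power2_eq_square algebra_simps)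
    ultimately show ?thesis using g by linarith
  qed
  have Kt: "K*t \<le> g/30"
  proof -
    have "K'*t \<ge> 0" using K' t0 by simp
    moreover have "(3*K + K') * t = 3*(K*t) + K'*t" by (simp add: algebra_simps)
    ultimately show ?thesis using tK by linarith
  qed
  have K't: "K'*t \<le> g/10 - 3*(K*t)"
  proof -
    have "(3*K + K') * t = 3*(K*t) + K'*t" by (simp add: algebra_simps)
    then show ?thesis using tK by linarith
  qed
  have d0: "0 \<le> \<delta>" unfolding \<delta>_def using eps gpos K t0 Br0 by simp
  have d1: "\<delta> \<le> 1" unfolding \<delta>_def using eps gle Kt B Brho0 rM0 by linarith
  have "y^2 \<le> (a + \<delta>)^2" using y0 up unfolding \<delta>_def by (intro power_mono) auto
  also have "\<dots> = a^2 + 2*a*\<delta> + \<delta>*\<delta>" by (simp add: power2_eq_square algebra_simps)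
  also have "\<dots> \<le> a^2 + 2*\<delta> + \<delta>"
  proof -
    have "a*\<delta> \<le> 1*\<delta>" using a1 d0 by (intro mult_right_mono) auto
    moreover have "\<delta>*\<delta> \<le> \<delta>*1" using d0 d1 by (intro mult_left_mono) auto
    ultimately show ?thesis by linarith
  qed
  finally have "y^2 \<le> a^2 + 3*\<delta>" by simp
  with lo have "a - a^2 \<le> K'*t + 2*rM + Brho + 3*\<delta>" by linarith
  moreover have "3*\<delta> = 12*\<epsilon> + 3*(K*t) + 3*Br" by (simp add: \<delta>_def algebra_simps)
  ultimately have "g \<le> g/10 - 3*(K*t) + 2*rM + Brho + 12*\<epsilon> + 3*(K*t) + 3*Br"
    using g K't by linarith
  then show False using eps B gpos by linarith
qed

theorem theorem4:
  fixes c1 c2 :: real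
  assumes "0 < c2" and "c2 < 1/2"
  shows "\<not> (\<exists>A :: nat set.
           (\<lambda>N::nat. real (\<Sum>n\<le>N. rep_count A n) - (c2 * real N ^ 2 + c1 * real N))
             \<in> o(\<lambda>N. sqrt (real N)))"
proof
  assume "\<exists>A :: nat set. (\<lambda>N::nat. real (\<Sum>n\<le>N. rep_count A n) - (c2 * real N ^ 2 + c1 * real N))
             \<in> o(\<lambda>N. sqrt (real N))"
  then obtain A :: "nat set" where hA: "(\<lambda>N::nat. real (\<Sum>n\<le>N. rep_count A n) - (c2 * real N ^ 2 + c1 * real N))
             \<in> o(\<lambda>N. sqrt (real N))" by blast
  define e where "e = eA A c1 c2"
  have fe: "(\<lambda>N::nat. real (\<Sum>n\<le>N. rep_count A n) - (c2 * real N ^ 2 + c1 * real N)) = e"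
    by (auto simp: e_def eA_def sA_def)
  have c2pos: "c2 > 0" using assms by simp
  define a where "a = 2*c2"
  have a0: "0 < a" and a1: "a < 1" using assms by (auto simp: a_def)
  define g where "g = a - a^2"
  have gpos: "g > 0" using a0 a1 by (simp add: g_def power2_eq_square)
  have gle: "g \<le> 1"
  proof -
    have "a^2 \<ge> 0" by simp
    then show ?thesis using a1 unfolding g_def by linarith
  qed
  define \<epsilon> where "\<epsilon> = g / 100"
  have eps0: "\<epsilon> > 0" using gpos by (simp add: \<epsilon>_def)
  have eps1: "\<epsilon> \<le> 1" using gle by (simp add: \<epsilon>_def)
  obtain C where C0: "C \<ge> 0" and eb: "\<And>n. \<bar>e n\<bar> \<le> \<epsilon> * sqrt (real n) + C"
    using e_bound[OF hA[unfolded fe] eps0] by blast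
  have eb1: "\<bar>e n\<bar> \<le> real n + C" for n
  proof -
    have "\<epsilon> * sqrt (real n) \<le> 1 * sqrt (real n)" using eps1 by (intro mult_right_mono) auto
    also have "\<dots> \<le> real n" using sqrt_nat_le by simp
    finally show ?thesis using eb[of n] by linarith
  qed
  have eb2: "(e n)^2 \<le> 2 * \<epsilon>^2 * real n + 2 * C^2" for n
  proof -
    have "(e n)^2 = \<bar>e n\<bar>^2" by simp
    also have "\<dots> \<le> (\<epsilon> * sqrt (real n) + C)^2" using eb[of n] by (intro power_mono) auto
    also have "\<dots> \<le> 2 * (\<epsilon> * sqrt (real n))^2 + 2 * C^2"
    proof -
      have "0 \<le> (\<epsilon> * sqrt (real n) - C)^2" by simp
      moreover have "(\<epsilon> * sqrt (real n) - C)^2 = (\<epsilon> * sqrt (real n))^2 - 2 * (\<epsilon> * sqrt (real n)) * C + C^2"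
        by (simp add: power2_eq_square algebra_simps)
      moreover have "(\<epsilon> * sqrt (real n) + C)^2 = (\<epsilon> * sqrt (real n))^2 + 2 * (\<epsilon> * sqrt (real n)) * C + C^2"
        by (simp add: power2_eq_square algebra_simps)
      ultimately show ?thesis by linarith
    qed
    also have "\<dots> = 2 * \<epsilon>^2 * real n + 2 * C^2" by (simp add: power_mult_distrib)
    finally show ?thesis .
  qed
  define cp where "cp = \<bar>c1 - 3*c2\<bar>"
  define cpp where "cpp = \<bar>c1 - c2\<bar>"
  define K where "K = cp + cpp + 4*C"
  define K' where "K' = cp + cpp + 1 + C"
  have K0: "K \<ge> 0" and K'0: "K' \<ge> 0" using C0 by (auto simp: K_def K'_def cp_def cpp_def)
  define t where "t = min (1/2) (g / (10 * (3*K + K' + 1)))"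
  have t0: "t > 0" using gpos K0 K'0 by (simp add: t_def)
  have t1: "t \<le> 1/2" unfolding t_def by (rule min.cobounded1)
  have tK: "(3*K + K') * t \<le> g / 10"
  proof -
    have "(3*K + K') * t \<le> (3*K + K' + 1) * t" using t0 by simp
    also have "\<dots> \<le> (3*K + K' + 1) * (g / (10 * (3*K + K' + 1)))"
      using K0 K'0 by (intro mult_left_mono) (auto simp: t_def)
    also have "\<dots> = g / 10" using K0 K'0 by (simp add: field_simps)
    finally show ?thesis .
  qed
  define u where "u = t^2"
  have u0: "u > 0" using t0 by (simp add: u_def)
  have ut: "u \<le> t" using t0 t1 by (simp add: u_def power2_eq_square)
  have u1: "u \<le> 1" using ut t1 by simp
  have sqrtu: "sqrt u = t" using t0 by (simp add: u_def)
  define \<rho> where "\<rho> = 1 - u"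
  have rho0: "0 < \<rho>" and rho1: "\<rho> < 1" using u0 ut t1 by (auto simp: \<rho>_def)
  define r where "r = sqrt \<rho>"
  have r0: "0 \<le> r" and r1: "r < 1" using rho0 rho1 by (auto simp: r_def)
  have r2: "r^2 = \<rho>" using rho0 by (simp add: r_def)
  have rhor: "\<rho> \<le> r"
  proof -
    have "r * r \<le> r * 1" using r0 r1 by (intro mult_left_mono) auto
    then show ?thesis using r2 by (simp add: power2_eq_square)
  qed
  obtain M where M: "M \<ge> 1" and M1: "real M^2 * r^M \<le> g/240" and M2: "(4*C+2) * r^M \<le> g/20"
  proof -
    have "eventually (\<lambda>M. real M^2 * r^M < g/240) sequentially"
      using pow_tends[OF r0 r1] gpos by (intro order_tendstoD(2)) auto
    moreover have "eventually (\<lambda>M. (4*C+2) * r^M < g/20) sequentially"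
    proof -
      have "(\<lambda>M. (4*C+2) * r^M) \<longlonglongrightarrow> (4*C+2) * 0"
        using r0 r1 by (intro tendsto_mult tendsto_const LIMSEQ_power_zero) auto
      then show ?thesis using gpos by (intro order_tendstoD(2)) auto
    qed
    moreover have "eventually (\<lambda>M. M \<ge> (1::nat)) sequentially" by (rule eventually_ge_at_top)
    ultimately have "eventually (\<lambda>M. M \<ge> 1 \<and> real M^2 * r^M < g/240 \<and> (4*C+2) * r^M < g/20) sequentially"
      by eventually_elim auto
    then obtain N where N: "\<forall>n\<ge>N. n \<ge> 1 \<and> real n^2 * r^n < g/240 \<and> (4*C+2) * r^n < g/20"
      unfolding eventually_sequentially by blast
    then have "N \<ge> 1 \<and> real N^2 * r^N < g/240 \<and> (4*C+2) * r^N < g/20" by blast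
    then show ?thesis using that by auto
  qed
  define q where "q = (\<Sum>n<M. \<rho>^n)"
  define X where "X = (\<Sum>n<M. ind A n * \<rho>^n)"
  define S1 where "S1 = (\<Sum>n<M. real n * \<rho>^n)"
  define Se where "Se = (\<Sum>n<M. (e n)^2 * \<rho>^n)"
  define Sa where "Sa = (\<Sum>n<M. \<bar>e n\<bar> * \<rho>^n)"
  define Br where "Br = \<bar>e (M-1)\<bar> * r^M + (1 + 2*c2) * real M^2 * r^M"
  define Bp where "Bp = \<bar>e (M-1)\<bar> * \<rho>^M + (1 + 2*c2) * real M^2 * \<rho>^M"
  have up0: "X \<le> a*q + cp * sqrt q + cpp + 2 * sqrt Se + Br"
    using upper[OF M r0 less_imp_le[OF r1] c2pos, of A c1] unfolding r2 X_def q_def Se_def Br_def e_def a_def cp_def cpp_def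
    by simp
  have lo0: "a*q^2 - cp * q - cpp - u * Sa - Bp \<le> X^2"
    using lower[OF M less_imp_le[OF rho0] less_imp_le[OF rho1] c2pos, of c1 A] unfolding X_def q_def Sa_def Bp_def e_def a_def cp_def cpp_def u_def \<rho>_def
    by simp
  have uq: "u * q = 1 - \<rho>^M" using geo_sum[OF rho1, of M] by (simp add: q_def \<rho>_def)
  have rhoM0: "0 \<le> \<rho>^M" and rhoM1: "\<rho>^M \<le> 1" using rho0 rho1 by (auto intro: power_le_one)
  have uq1: "u * q \<le> 1" and uq0: "0 \<le> u * q" using uq rhoM0 rhoM1 by auto
  have q0: "q \<ge> 0" using rho0 by (simp add: q_def sum_nonneg)
  have u_eq: "u = 1 - \<rho>" by (simp add: \<rho>_def)
  have uS1: "u * S1 \<le> q" unfolding u_eq S1_def q_def using n_sum[of \<rho> M] rho0 rho1 by simp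
  have u2S1: "u^2 * S1 \<le> 1"
  proof -
    have "u^2 * S1 = u * (u * S1)" by (simp add: power2_eq_square)
    also have "\<dots> \<le> u * q" using uS1 u0 by (intro mult_left_mono) auto
    finally show ?thesis using uq1 by simp
  qed
  have Se_le: "Se \<le> 2 * \<epsilon>^2 * S1 + 2 * C^2 * q"
  proof -
    have "Se \<le> (\<Sum>n<M. (2 * \<epsilon>^2 * real n + 2 * C^2) * \<rho>^n)"
      unfolding Se_def using rho0 eb2 by (intro sum_mono mult_right_mono) auto
    also have "\<dots> = (\<Sum>n<M. 2 * \<epsilon>^2 * (real n * \<rho>^n) + 2 * C^2 * \<rho>^n)"
      by (intro sum.cong refl) (simp add: algebra_simps)
    also have "\<dots> = 2 * \<epsilon>^2 * S1 + 2 * C^2 * q"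
      by (simp add: S1_def q_def sum.distrib sum_distrib_left)
    finally show ?thesis .
  qed
  have Sa_le: "Sa \<le> S1 + C * q"
  proof -
    have "Sa \<le> (\<Sum>n<M. (real n + C) * \<rho>^n)"
      unfolding Sa_def using rho0 eb1 by (intro sum_mono mult_right_mono) auto
    also have "\<dots> = (\<Sum>n<M. real n * \<rho>^n + C * \<rho>^n)"
      by (intro sum.cong refl) (simp add: algebra_simps)
    also have "\<dots> = S1 + C * q"
      by (simp add: S1_def q_def sum.distrib sum_distrib_left)
    finally show ?thesis .
  qed
  have Se0: "Se \<ge> 0" using rho0 by (simp add: Se_def sum_nonneg)
  have X0: "X \<ge> 0" using rho0 by (simp add: X_def sum_nonneg ind_def)
  define y where "y = u * X"
  have y0: "y \<ge> 0" using u0 X0 by (simp add: y_def)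
  have t_usq: "u * sqrt q \<le> t"
  proof -
    have "u * sqrt q = sqrt (u^2 * q)" using u0 by (simp add: real_sqrt_mult)
    also have "u^2 * q \<le> u" using uq1 u0 by (simp add: power2_eq_square mult.assoc mult_left_le)
    then have "sqrt (u^2 * q) \<le> sqrt u" by simp
    finally show ?thesis using sqrtu by simp
  qed
  have t_usSe: "u * sqrt Se \<le> 2*\<epsilon> + 2*C*t"
  proof -
    have "u * sqrt Se = sqrt (u^2 * Se)" using u0 by (simp add: real_sqrt_mult)
    also have "u^2 * Se \<le> (2*\<epsilon> + 2*C*t)^2"
    proof -
      have "u^2 * Se \<le> u^2 * (2 * \<epsilon>^2 * S1 + 2 * C^2 * q)" using Se_le by (intro mult_left_mono) auto
      also have "\<dots> = 2 * \<epsilon>^2 * (u^2 * S1) + 2 * C^2 * u * (u * q)" by (simp add: algebra_simps power2_eq_square)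
      also have "\<dots> \<le> 2 * \<epsilon>^2 * 1 + 2 * C^2 * u * 1"
        using u2S1 uq1 u0 by (intro add_mono mult_left_mono) auto
      also have "\<dots> \<le> (2*\<epsilon> + 2*C*t)^2"
        using eps0 C0 t0 by (simp add: u_def power2_eq_square algebra_simps)
      finally show ?thesis .
    qed
    then have "sqrt (u^2 * Se) \<le> sqrt ((2*\<epsilon> + 2*C*t)^2)" by (rule real_sqrt_le_mono)
    also have "\<dots> = 2*\<epsilon> + 2*C*t" using eps0 C0 t0 by simp
    finally show ?thesis .
  qed
  have Br0: "Br \<ge> 0" using r0 c2pos by (simp add: Br_def)
  have Bp0: "Bp \<ge> 0" using rho0 c2pos by (simp add: Bp_def)
  have up: "y \<le> a + 4*\<epsilon> + K*t + Br"
  proof -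
    have "y \<le> u * (a*q + cp * sqrt q + cpp + 2 * sqrt Se + Br)"
      unfolding y_def using up0 u0 by (intro mult_left_mono) auto
    also have "\<dots> = a*(u*q) + cp * (u * sqrt q) + cpp * u + 2 * (u * sqrt Se) + u * Br"
      by (simp add: algebra_simps)
    also have "\<dots> \<le> a*1 + cp * t + cpp * t + 2 * (2*\<epsilon> + 2*C*t) + 1 * Br"
      using uq1 t_usq ut t_usSe u1 a0 Br0
      by (intro add_mono mult_left_mono mult_right_mono) (auto simp: cp_def cpp_def)
    also have "\<dots> = a + 4*\<epsilon> + K*t + Br" by (simp add: K_def algebra_simps)
    finally show ?thesis .
  qed
  have lo: "a - K'*t - 2*\<rho>^M - Bp \<le> y^2"
  proof -
    have "u^2 * (a*q^2 - cp * q - cpp - u * Sa - Bp) \<le> u^2 * X^2"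
      using lo0 by (intro mult_left_mono) auto
    also have "\<dots> = y^2" by (simp add: y_def power_mult_distrib)
    finally have 1: "u^2 * (a*q^2 - cp * q - cpp - u * Sa - Bp) \<le> y^2" .
    have e1: "u^2 * (a*q^2 - cp * q - cpp - u * Sa - Bp) = a*(u*q)^2 - cp*u*(u*q) - cpp*u^2 - u^3 * Sa - u^2 * Bp"
      by (simp add: algebra_simps power2_eq_square power3_eq_cube)
    have h1: "a*(u*q)^2 \<ge> a - 2*\<rho>^M"
    proof -
      have "(u*q)^2 \<ge> 1 - 2*\<rho>^M" unfolding uq by (simp add: power2_eq_square algebra_simps)
      then have "a*(u*q)^2 \<ge> a*(1 - 2*\<rho>^M)" using a0 by (intro mult_left_mono) auto
      moreover have "a*(2*\<rho>^M) \<le> 1*(2*\<rho>^M)" using a1 rhoM0 by (intro mult_right_mono) auto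
      ultimately show ?thesis by (simp add: algebra_simps)
    qed
    have h2: "cp*u*(u*q) \<le> cp*t"
    proof -
      have "cp*u*(u*q) \<le> cp*u*1" using uq1 u0 by (intro mult_left_mono) (auto simp: cp_def)
      also have "\<dots> \<le> cp * t" using ut by (simp add: cp_def mult_left_mono)
      finally show ?thesis .
    qed
    have h3: "cpp*u^2 \<le> cpp*t"
    proof -
      have "u^2 \<le> u" using u0 u1 by (simp add: power2_eq_square mult_left_le)
      then show ?thesis using ut by (intro mult_left_mono) (auto simp: cpp_def)
    qed
    have h4: "u^3 * Sa \<le> t + C*t"
    proof -
      have "u^3 * Sa \<le> u^3 * (S1 + C*q)" using Sa_le u0 by (intro mult_left_mono) auto
      also have "\<dots> = u * (u^2 * S1) + C * u^2 * (u * q)" by (simp add: algebra_simps power2_eq_square power3_eq_cube)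
      also have "\<dots> \<le> u * 1 + C * u^2 * 1" using u2S1 uq1 u0 C0 by (intro add_mono mult_left_mono) auto
      also have "\<dots> \<le> t + C * t"
      proof -
        have "u^2 \<le> u" using u0 u1 by (simp add: power2_eq_square mult_left_le)
        then have "C * u^2 \<le> C * t" using ut C0 by (simp add: mult_left_mono)
        then show ?thesis using ut by simp
      qed
      finally show ?thesis .
    qed
    have h5: "u^2 * Bp \<le> Bp"
    proof -
      have "u^2 \<le> 1" using u0 u1 by (simp add: power_le_one)
      then show ?thesis using Bp0 by (simp add: mult_left_le_one_le)
    qed
    show ?thesis using 1 e1 h1 h2 h3 h4 h5 by (simp add: K'_def algebra_simps)
  qed
  have rM0: "0 \<le> r^M" using r0 by simp
  have Bp_le: "Bp \<le> Br"
  proof -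
    have "\<rho>^M \<le> r^M" using rhor rho0 by (intro power_mono) auto
    then show ?thesis unfolding Bp_def Br_def using c2pos
      by (intro add_mono mult_left_mono) auto
  qed
  have Br_le: "Br \<le> 3 * (real M^2 * r^M) + C * r^M"
  proof -
    have "\<bar>e (M-1)\<bar> \<le> real M^2 + C"
    proof -
      have "M - 1 \<le> M * M" by (metis diff_le_self le_square order_trans)
      then have "real (M-1) \<le> real M^2" by (simp add: power2_eq_square flip: of_nat_mult)
      then show ?thesis using eb1[of "M-1"] by linarith
    qed
    then have "\<bar>e (M-1)\<bar> * r^M \<le> (real M^2 + C) * r^M" using rM0 by (intro mult_right_mono) auto
    moreover have "(1 + 2*c2) * real M^2 * r^M \<le> 2 * (real M^2 * r^M)"
    proof -
      have "(1 + 2*c2) * (real M^2 * r^M) \<le> 2 * (real M^2 * r^M)" using assms rM0 by (intro mult_right_mono) auto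
      then show ?thesis by (simp add: mult.assoc)
    qed
    ultimately show ?thesis unfolding Br_def by (simp add: algebra_simps)
  qed
  have rhoMr: "\<rho>^M \<le> r^M" using rhor rho0 by (intro power_mono) auto
  have B: "3 * Br + Bp + 2 * \<rho>^M \<le> g / 10"
    using Bp_le Br_le rhoMr M1 M2 by (simp add: algebra_simps)
  show False
    by (rule final_arith[OF a0 a1 g_def \<epsilon>_def _ K0 K'0 tK B Br0 Bp0 rhoM0 y0 up lo]) (use t0 in simp)
qed

end
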